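(* With the notation below: (i) For each $H\in C_p$ there is a unique map $\chi_H:H\to H_p/(p-1)H_p\simeq\mathbb{Z}/(p-1)\mathbb{Z}$ such that $\chi_H=\chi\circ\lambda^{-1}$ (i.e. $\chi_H(x)=\chi(\lambda^{-1}x)$) for every $\lambda\in\mathbb{R}_+^*$ with $H=\lambda H_p$. (ii) The subgroup $\mathcal P$ of principal divisors is contained in the kernel of the group homomorphism $\chi:\mathrm{Div}(C_p)\to\mathbb{Z}/(p-1)\mathbb{Z}$, $\chi(D)=\sum_H\chi_H(D(H))$.
   Context: Let $p$ be a prime and $H_p=\mathbb{Z}[1/p]\subset\mathbb{Q}$. The ring homomorphism $\chi:H_p\to\mathbb{Z}/(p-1)\mathbb{Z}$ is $\chi(a/p^n)=a\bmod(p-1)$ ($a\in\mathbb{Z}$, $n\in\mathbb{N}$); its kernel is $(p-1)H_p$. $C_p$ is the set of subgroups $H=\lambda H_p\subset\mathbb{R}$, $\lambda>0$. $\mathcal K(C_p)$: continuous piecewise affine functions $f:(0,\infty)\to\mathbb{R}$ with slopes in $H_p$ and $f(p\lambda)=f(\lambda)$ (plus the constant $-\infty$). For real-valued $f$ and $H=\lambda H_p$, $\mathrm{Ord}_H(f)=h_+-h_-$ with $h_\pm=\lim_{\epsilon\to0\pm}(f((1+\epsilon)\lambda)-f(\lambda))/\epsilon\in H$. A divisor $D$ on $C_p$ assigns $D(H)\in H$ to each $H\in C_p$, zero for all but finitely many $H$; $\mathrm{Div}(C_p)$ is the group of divisors under pointwise addition; the principal divisor of real-valued $f\in\mathcal K(C_p)$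 is $(f)(H)=\mathrm{Ord}_H(f)$, and $\mathcal P$ is the subgroup of principal divisors. *)

theory Defs
  imports "HOL-Analysis.Analysis" "HOL-Computational_Algebra.Primes"
begin

definition Hp :: "nat \<Rightarrow> real set" where
  "Hp p = {of_int a / real p ^ n | a n. True}"

text \<open>chi : H_p -> Z/(p-1)Z, chi(a/p^n) = a mod (p-1); residues represented in {0..p-2}.\<close>
definition chi :: "nat \<Rightarrow> real \<Rightarrow> int" where
  "chi p x = (THE r. \<exists>a n. x = of_int a / real p ^ n \<and> r = a mod (int p - 1))"

definition scale :: "real \<Rightarrow> real set \<Rightarrow> real set" where
  "scale l S = (\<lambda>x. l * x) ` S"

definition Cp :: "nat \<Rightarrow> real set set" where
  "Cp p = {scale l (Hp p) | l. l > 0}"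

definition chiH :: "nat \<Rightarrow> real set \<Rightarrow> real \<Rightarrow> int" where
  "chiH p H x = chi p (x / (SOME l. l > 0 \<and> H = scale l (Hp p)))"

text \<open>Real-valued elements of K(C_p): continuous piecewise affine functions on (0,oo)
  (breakpoints locally finite in (0,oo)) with slopes in H_p and f(p x) = f(x).\<close>
definition inK :: "nat \<Rightarrow> (real \<Rightarrow> real) \<Rightarrow> bool" where
  "inK p f \<longleftrightarrow> continuous_on {0<..} f \<and> (\<forall>x>0. f (real p * x) = f x) \<and>
     (\<exists>B. B \<subseteq> {0<..} \<and> (\<forall>a b. 0 < a \<longrightarrow> finite (B \<inter> {a..b})) \<and>
        (\<forall>a b. 0 < a \<longrightarrow> a < b \<longrightarrow> B \<inter> {a<..<b} = {} \<longrightarrow>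
           (\<exists>s\<in>Hp p. \<exists>c. \<forall>x\<in>{a..b}. f x = s * x + c)))"

definition OrdH :: "nat \<Rightarrow> real set \<Rightarrow> (real \<Rightarrow> real) \<Rightarrow> real" where
  "OrdH p H f = (let l = (SOME l. l > 0 \<and> H = scale l (Hp p)) in
      Lim (at_right 0) (\<lambda>e. (f ((1 + e) * l) - f l) / e)
    - Lim (at_left 0) (\<lambda>e. (f ((1 + e) * l) - f l) / e))"

definition Div :: "nat \<Rightarrow> (real set \<Rightarrow> real) set" where
  "Div p = {D. (\<forall>H\<in>Cp p. D H \<in> H) \<and> (\<forall>H. H \<notin> Cp p \<longrightarrow> D H = 0)
              \<and> finite {H \<in> Cp p. D H \<noteq> 0}}"

definition principal_div :: "nat \<Rightarrow> (real \<Rightarrow> real) \<Rightarrow> real set \<Rightarrow> real" where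
  "principal_div p f H = (if H \<in> Cp p then OrdH p H f else 0)"

definition chiDiv :: "nat \<Rightarrow> (real set \<Rightarrow> real) \<Rightarrow> int" where
  "chiDiv p D = (\<Sum>H\<in>{H \<in> Cp p. D H \<noteq> 0}. chiH p H (D H)) mod (int p - 1)"

end

theory Submission
  imports Defs
begin


lemma Hp_iff: "x \<in> Hp p \<longleftrightarrow> (\<exists>a n. x = of_int a / real p ^ n)"
  by (simp add: Hp_def)

lemma pm_mod:
  assumes "p \<ge> 2"
  shows "(a * int p ^ m) mod (int p - 1) = a mod (int p - 1)"
proof -
  have "int p mod (int p - 1) = 1 mod (int p - 1)"
    using assms by (metis add.commute diff_add_cancel mod_add_self1)
  then have "(int p)^m mod (int p - 1) = 1 mod (int p - 1)"
    by (metis power_mod power_one)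
  then show ?thesis by (metis mod_mult_right_eq mult.right_neutral)
qed

lemma chi_eq:
  assumes "p \<ge> 2"
  shows "chi p (of_int a / real p ^ n) = a mod (int p - 1)"
proof -
  have "b mod (int p - 1) = a mod (int p - 1)" if "of_int a / real p ^ n = of_int b / real p ^ m" for b m
  proof -
    have pp: "real p ^ k > 0" for k using assms by simp
    have "of_int a * real p ^ m = of_int b * real p ^ n"
      using that pp[of n] pp[of m] by (simp add: field_simps)
    then have "real_of_int (a * int p ^ m) = real_of_int (b * int p ^ n)" by simp
    then have "a * int p ^ m = b * int p ^ n" by linarith
    then show ?thesis using pm_mod[OF assms, of a m] pm_mod[OF assms, of b n] by simp
  qed
  then show ?thesis unfolding chi_def
    by (intro the_equality) auto
qed

lemma chi_Hp:
  assumes "p \<ge> 2" "x \<in> Hp p"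
  obtains a n where "x = of_int a / real p ^ n" "chi p x = a mod (int p - 1)"
  using assms chi_eq by (auto simp: Hp_iff)

lemma Hp_add:
  assumes "p \<ge> 2" "x \<in> Hp p" "y \<in> Hp p"
  shows "x + y \<in> Hp p \<and> chi p (x + y) = (chi p x + chi p y) mod (int p - 1)"
proof -
  obtain a n where a: "x = of_int a / real p ^ n" "chi p x = a mod (int p - 1)" using chi_Hp assms by blast
  obtain b m where b: "y = of_int b / real p ^ m" "chi p y = b mod (int p - 1)" using chi_Hp assms by blast
  have pp: "real p ^ k > 0" for k using assms by simp
  have e: "x + y = of_int (a * int p ^ m + b * int p ^ n) / real p ^ (n + m)"
    using pp[of n] pp[of m] by (simp add: a b field_simps power_add)
  have "chi p (x+y) = (a * int p ^ m + b * int p ^ n) mod (int p - 1)"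
    unfolding e by (rule chi_eq[OF assms(1)])
  also have "\<dots> = (a + b) mod (int p - 1)"
    using pm_mod[OF assms(1)] by (metis mod_add_cong)
  also have "\<dots> = (chi p x + chi p y) mod (int p - 1)" unfolding a(2) b(2) by (simp add: mod_add_eq)
  finally have "chi p (x+y) = (chi p x + chi p y) mod (int p - 1)" .
  moreover have "x + y \<in> Hp p" unfolding Hp_iff using e by blast
  ultimately show ?thesis by blast
qed

lemma Hp_uminus:
  assumes "x \<in> Hp p" shows "- x \<in> Hp p"
proof -
  obtain a n where "x = of_int a / real p ^ n" using assms by (auto simp: Hp_iff)
  then have "- x = of_int (-a) / real p ^ n" by simp
  then show ?thesis unfolding Hp_iff by blast
qed

lemma Hp_diff:
  assumes "p \<ge> 2" "x \<in> Hp p" "y \<in> Hp p" shows "x - y \<in> Hp p"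
  using Hp_add[OF assms(1,2) Hp_uminus[OF assms(3)]] by simp

lemma Hp_mult_pow:
  assumes "p \<ge> 2" "x \<in> Hp p"
  shows "x * real p ^ j / real p ^ n \<in> Hp p \<and> chi p (x * real p ^ j / real p ^ n) = chi p x"
proof -
  obtain a m where a: "x = of_int a / real p ^ m" "chi p x = a mod (int p - 1)" using chi_Hp assms by blast
  have pp: "real p ^ k > 0" for k using assms by simp
  have e: "x * real p ^ j / real p ^ n = of_int (a * int p ^ j) / real p ^ (m + n)"
    using pp[of n] pp[of m] by (simp add: a field_simps power_add)
  have "chi p (x * real p ^ j / real p ^ n) = (a * int p ^ j) mod (int p - 1)"
    unfolding e by (rule chi_eq[OF assms(1)])
  moreover have "(a * int p ^ j) mod (int p - 1) = chi p x" using pm_mod[OF assms(1)] a(2) by simp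
  ultimately show ?thesis using e unfolding Hp_iff by metis
qed

lemma Hp_one: "1 \<in> Hp p"
  unfolding Hp_iff by (rule exI[of _ 1], rule exI[of _ 0]) simp

lemma Hp_zero: "0 \<in> Hp p"
  unfolding Hp_iff by (rule exI[of _ 0], rule exI[of _ 0]) simp

lemma chi_zero: "p \<ge> 2 \<Longrightarrow> chi p 0 = 0"
  using chi_eq[of p 0 0] by simp

lemma chi_final:
  assumes "p \<ge> 2" "s \<in> Hp p"
  shows "chi p (s / real p - s) = 0"
proof -
  obtain a n where a: "s = of_int a / real p ^ n" using assms by (auto simp: Hp_iff)
  have pp: "real p ^ k > 0" for k using assms by simp
  have e: "s / real p - s = of_int (- a * (int p - 1)) / real p ^ (Suc n)"
    using pp[of n] assms by (simp add: a field_simps)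
  show ?thesis unfolding e chi_eq[OF assms(1)] by simp
qed

lemma chi_sum:
  assumes "p \<ge> 2" "finite K" "\<forall>r\<in>K. g r \<in> Hp p"
  shows "(\<Sum>r\<in>K. g r) \<in> Hp p \<and> (\<Sum>r\<in>K. chi p (g r)) mod (int p - 1) = chi p (\<Sum>r\<in>K. g r)"
  using assms(2,3)
proof (induction K rule: finite_induct)
  case empty
  then show ?case using chi_zero[OF assms(1)] Hp_zero by simp
next
  case (insert x F)
  then have IH: "(\<Sum>r\<in>F. g r) \<in> Hp p" "(\<Sum>r\<in>F. chi p (g r)) mod (int p - 1) = chi p (\<Sum>r\<in>F. g r)"
    by auto
  have gx: "g x \<in> Hp p" using insert by auto
  have "(\<Sum>r\<in>insert x F. chi p (g r)) mod (int p - 1) = (chi p (g x) + (\<Sum>r\<in>F. chi p (g r)) mod (int p - 1)) mod (int p - 1)"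
  proof -
    have "(\<Sum>r\<in>insert x F. chi p (g r)) = chi p (g x) + (\<Sum>r\<in>F. chi p (g r))" using insert by simp
    then show ?thesis by (metis mod_add_right_eq)
  qed
  also have "\<dots> = chi p (g x + (\<Sum>r\<in>F. g r))" using IH Hp_add[OF assms(1) gx IH(1)] by (metis mod_add_right_eq)
  finally show ?case using insert Hp_add[OF assms(1) gx IH(1)] by simp
qed



lemma scale_eq:
  assumes "p \<ge> 2" "r > 0"
  shows "scale (r * real p ^ j / real p ^ n) (Hp p) = scale r (Hp p)"
proof
  show "scale (r * real p ^ j / real p ^ n) (Hp p) \<subseteq> scale r (Hp p)"
  proof
    fix x assume "x \<in> scale (r * real p ^ j / real p ^ n) (Hp p)"
    then obtain h where h: "h \<in> Hp p" "x = r * real p ^ j / real p ^ n * h" by (auto simp: scale_def)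
    have "h * real p ^ j / real p ^ n \<in> Hp p" using Hp_mult_pow[OF assms(1) h(1)] by blast
    moreover have "x = r * (h * real p ^ j / real p ^ n)" using h by simp
    ultimately show "x \<in> scale r (Hp p)" unfolding scale_def by blast
  qed
  show "scale r (Hp p) \<subseteq> scale (r * real p ^ j / real p ^ n) (Hp p)"
  proof
    fix x assume "x \<in> scale r (Hp p)"
    then obtain h where h: "h \<in> Hp p" "x = r * h" by (auto simp: scale_def)
    have "h * real p ^ n / real p ^ j \<in> Hp p" using Hp_mult_pow[OF assms(1) h(1)] by blast
    moreover have "x = r * real p ^ j / real p ^ n * (h * real p ^ n / real p ^ j)" using h assms by simp
    ultimately show "x \<in> scale (r * real p ^ j / real p ^ n) (Hp p)" unfolding scale_def by blast
  qed
qed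

lemma class_lemma:
  assumes "prime p" "l > 0" "r > 0" "scale l (Hp p) = scale r (Hp p)"
  shows "\<exists>j n. l = r * real p ^ j / real p ^ n"
proof -
  have p2: "p \<ge> 2" using assms(1) prime_ge_2_nat by blast
  have pp: "real p ^ k > 0" for k using p2 by simp
  have "l \<in> scale l (Hp p)" using Hp_one[of p] by (force simp: scale_def)
  then have "l \<in> scale r (Hp p)" using assms by simp
  then obtain a n where a: "l = r * (of_int a / real p ^ n)" by (auto simp: scale_def Hp_iff)
  have "r \<in> scale r (Hp p)" using Hp_one[of p] by (force simp: scale_def)
  then have "r \<in> scale l (Hp p)" using assms by simp
  then obtain b m where b: "r = l * (of_int b / real p ^ m)" by (auto simp: scale_def Hp_iff)
  have "l = l * (of_int a / real p ^ n) * (of_int b / real p ^ m)" using a b by (metis mult.assoc mult.commute)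
  then have "of_int a * of_int b = real p ^ n * real p ^ m" using assms(2) pp[of n] pp[of m]
    by (simp add: field_simps)
  then have "real_of_int (a * b) = real_of_int (int (p ^ (n + m)))" by (simp add: power_add)
  then have ab: "a * b = int (p ^ (n+m))" by linarith
  have apos: "a > 0"
  proof -
    have "of_int a / real p ^ n > 0" using a assms(2,3)
      by (metis zero_less_mult_pos)
    then show ?thesis using pp[of n] by (simp add: zero_less_divide_iff)
  qed
  have "a * b > 0" using ab p2 by simp
  then have bpos: "b > 0" using apos zero_less_mult_pos by blast
  have "nat a * nat b = p ^ (n + m)" using ab apos bpos by (metis nat_int nat_mult_distrib order_less_imp_le)
  then have "nat a dvd p ^ (n+m)" by (metis dvd_triv_left)
  then obtain i where "nat a = p ^ i" using divides_primepow_nat[OF assms(1)] by blast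
  moreover have "a = int (nat a)" using apos by simp
  ultimately have "a = int p ^ i" by (metis of_nat_power)
  then have "l = r * real p ^ i / real p ^ n" using a by simp
  then show ?thesis by blast
qed

lemma rep_exists:
  assumes "p \<ge> 2" "l > 0"
  shows "\<exists>j n. 1 \<le> l * real p ^ j / real p ^ n \<and> l * real p ^ j / real p ^ n < real p"
proof -
  have p1: "real p > 1" using assms by simp
  obtain j where j: "1 / l < real p ^ j" using real_arch_pow[OF p1] by blast
  then have j1: "1 \<le> l * real p ^ j" using assms(2) by (simp add: field_simps)
  obtain k where k: "l * real p ^ j < real p ^ k" using real_arch_pow[OF p1] by blast
  have ex: "\<exists>n. l * real p ^ j / real p ^ n < real p"
  proof
    have "real p ^ k \<le> real p * real p ^ k" using p1 by simp
    then have "l * real p ^ j < real p * real p ^ k" using k by linarith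
    then show "l * real p ^ j / real p ^ k < real p" using p1 by (simp add: divide_less_eq)
  qed
  define n where "n = (LEAST n. l * real p ^ j / real p ^ n < real p)"
  have n: "l * real p ^ j / real p ^ n < real p" unfolding n_def by (rule LeastI_ex[OF ex])
  have "1 \<le> l * real p ^ j / real p ^ n"
  proof (cases n)
    case 0 then show ?thesis using j1 by simp
  next
    case (Suc m)
    then have "m < n" by simp
    then have "\<not> l * real p ^ j / real p ^ m < real p" unfolding n_def by (rule not_less_Least)
    then have "real p \<le> l * real p ^ j / real p ^ m" by simp
    then show ?thesis using Suc p1 by (simp add: field_simps)
  qed
  then show ?thesis using n by blast
qed

lemma rep_unique:
  assumes "p \<ge> 2" "1 \<le> r" "r < real p" "1 \<le> r * real p ^ j / real p ^ n" "r * real p ^ j / real p ^ n < real p"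
  shows "r * real p ^ j / real p ^ n = r"
proof -
  have p1: "real p > 1" using assms by simp
  have "j = n"
  proof (rule ccontr)
    assume "j \<noteq> n"
    then consider "j > n" | "j < n" by linarith
    then show False
    proof cases
      case 1
      then have "real p ^ j = real p ^ n * real p ^ (j - n)" by (metis le_add_diff_inverse less_imp_le power_add)
      moreover have "real p ^ (j - n) \<ge> real p" using 1 p1
        by (metis One_nat_def Suc_leI power_increasing power_one_right zero_less_diff less_imp_le)
      ultimately have "r * real p ^ j / real p ^ n \<ge> r * real p" using p1 assms(2) by simp
      moreover have "r * real p \<ge> real p" using assms(2) p1 by simp
      ultimately show False using assms(5) by linarith
    next
      case 2
      then have "real p ^ n = real p ^ j * real p ^ (n - j)" by (metis le_add_diff_inverse less_imp_le power_add)
      moreover have "real p ^ (n - j) \<ge> real p" using 2 p1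
        by (metis One_nat_def Suc_leI power_increasing power_one_right zero_less_diff less_imp_le)
      ultimately have "r * real p ^ j / real p ^ n \<le> r / real p" using p1 assms(2)
        by (simp add: frac_le)
      moreover have "r / real p < 1" using assms(3) p1 by simp
      ultimately show False using assms(4) by linarith
    qed
  qed
  then show ?thesis using p1 by simp
qed



locale PA =
  fixes p :: nat and f :: "real \<Rightarrow> real" and B :: "real set"
  assumes prime: "prime p"
    and per: "\<forall>x>0. f (real p * x) = f x"
    and Bfin: "\<forall>a b. 0 < a \<longrightarrow> finite (B \<inter> {a..b})"
    and aff: "\<forall>a b. 0 < a \<longrightarrow> a < b \<longrightarrow> B \<inter> {a<..<b} = {} \<longrightarrow>
           (\<exists>s\<in>Hp p. \<exists>c. \<forall>x\<in>{a..b}. f x = s * x + c)"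
begin

lemma p2: "p \<ge> 2" using prime prime_ge_2_nat by blast
lemma p1: "real p > 1" using p2 by simp

lemma local_free:
  assumes "x > 0"
  shows "\<exists>d>0. d < x \<and> (\<forall>y\<in>B. y \<noteq> x \<longrightarrow> d \<le> \<bar>y - x\<bar>)"
proof -
  define F where "F = B \<inter> {x/2..2*x}"
  have fF: "finite F" using Bfin assms unfolding F_def by simp
  define D where "D = (\<lambda>y. \<bar>y - x\<bar>) ` (F - {x})"
  have fD: "finite D" using fF unfolding D_def by simp
  define d where "d = Min (insert (x/2) D)"
  have dpos: "d > 0" unfolding d_def using fD assms by (auto simp: D_def)
  have dle: "d \<le> x/2" unfolding d_def using fD by (intro Min_le) auto
  have "d \<le> \<bar>y - x\<bar>" if "y \<in> B" "y \<noteq> x" for y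
  proof (cases "y \<in> {x/2..2*x}")
    case True
    then have "\<bar>y - x\<bar> \<in> D" unfolding D_def F_def using that by auto
    then show ?thesis unfolding d_def using fD by simp
  next
    case False
    then have "\<bar>y - x\<bar> \<ge> x/2" using assms by auto
    then show ?thesis using dle by simp
  qed
  then show ?thesis using dpos dle assms by (intro exI[of _ d]) auto
qed

lemma right_slope:
  assumes "x > 0"
  shows "\<exists>s\<in>Hp p. \<exists>d>0. \<forall>y\<in>{x..x+d}. f y = f x + s * (y - x)"
proof -
  obtain d where d: "d > 0" "d < x" "\<forall>y\<in>B. y \<noteq> x \<longrightarrow> d \<le> \<bar>y - x\<bar>" using local_free[OF assms] by blast
  have e: "B \<inter> {x<..<x+d} = {}" using d by force
  have "x < x + d" using d by simp
  then obtain s c where s: "s \<in> Hp p" "\<forall>y\<in>{x..x+d}. f y = s * y + c" using aff[rule_format, OF assms _ e] by blast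
  have "\<forall>y\<in>{x..x+d}. f y = f x + s * (y - x)" using s(2) d(1) assms by (simp add: algebra_simps)
  then show ?thesis using s(1) d(1) by blast
qed

lemma left_slope:
  assumes "x > 0"
  shows "\<exists>s\<in>Hp p. \<exists>d>0. \<forall>y\<in>{x-d..x}. f y = f x + s * (y - x)"
proof -
  obtain d where d: "d > 0" "d < x" "\<forall>y\<in>B. y \<noteq> x \<longrightarrow> d \<le> \<bar>y - x\<bar>" using local_free[OF assms] by blast
  have e: "B \<inter> {x-d<..<x} = {}" using d by force
  have "0 < x - d" "x - d < x" using d by auto
  then obtain s c where s: "s \<in> Hp p" "\<forall>y\<in>{x-d..x}. f y = s * y + c" using aff[rule_format, OF _ _ e] by blast
  have "\<forall>y\<in>{x-d..x}. f y = f x + s * (y - x)" using s(2) d(1) assms by (simp add: algebra_simps)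
  then show ?thesis using s(1) d(1) by blast
qed

definition sp where "sp x = (THE s. \<exists>d>0. \<forall>y\<in>{x..x+d}. f y = f x + s * (y - x))"
definition sm where "sm x = (THE s. \<exists>d>0. \<forall>y\<in>{x-d..x}. f y = f x + s * (y - x))"
definition J where "J x = sp x - sm x"

lemma sp_unique:
  assumes "d > 0" "\<forall>y\<in>{x..x+d}. f y = f x + s * (y - x)"
  shows "sp x = s"
  unfolding sp_def
proof (rule the_equality)
  show "\<exists>d>0. \<forall>y\<in>{x..x+d}. f y = f x + s * (y - x)" using assms by blast
  fix s' assume "\<exists>d>0. \<forall>y\<in>{x..x+d}. f y = f x + s' * (y - x)"
  then obtain d' where d': "d' > 0" "\<forall>y\<in>{x..x+d'}. f y = f x + s' * (y - x)" by blast
  define m where "m = min d d'"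
  have "m > 0" using d'(1) assms(1) unfolding m_def by simp
  have i1: "x + m \<in> {x..x+d}" and i2: "x + m \<in> {x..x+d'}" using \<open>m > 0\<close> unfolding m_def by auto
  have "f (x + m) = f x + s * (x + m - x)" by (rule bspec[OF assms(2) i1])
  moreover have "f (x + m) = f x + s' * (x + m - x)" by (rule bspec[OF d'(2) i2])
  ultimately show "s' = s" using \<open>m > 0\<close> by simp
qed

lemma sm_unique:
  assumes "d > 0" "\<forall>y\<in>{x-d..x}. f y = f x + s * (y - x)"
  shows "sm x = s"
  unfolding sm_def
proof (rule the_equality)
  show "\<exists>d>0. \<forall>y\<in>{x-d..x}. f y = f x + s * (y - x)" using assms by blast
  fix s' assume "\<exists>d>0. \<forall>y\<in>{x-d..x}. f y = f x + s' * (y - x)"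
  then obtain d' where d': "d' > 0" "\<forall>y\<in>{x-d'..x}. f y = f x + s' * (y - x)" by blast
  define m where "m = min d d'"
  have "m > 0" using d'(1) assms(1) unfolding m_def by simp
  have i1: "x - m \<in> {x-d..x}" and i2: "x - m \<in> {x-d'..x}" using \<open>m > 0\<close> unfolding m_def by auto
  have "f (x - m) = f x + s * (x - m - x)" by (rule bspec[OF assms(2) i1])
  moreover have "f (x - m) = f x + s' * (x - m - x)" by (rule bspec[OF d'(2) i2])
  ultimately show "s' = s" using \<open>m > 0\<close> by simp
qed

lemma sp_prop:
  assumes "x > 0"
  shows "sp x \<in> Hp p \<and> (\<exists>d>0. \<forall>y\<in>{x..x+d}. f y = f x + sp x * (y - x))"
proof -
  obtain s d where "s \<in> Hp p" "d > 0" "\<forall>y\<in>{x..x+d}. f y = f x + s * (y - x)"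
    using right_slope[OF assms] by blast
  moreover then have "sp x = s" by (intro sp_unique) 
  ultimately show ?thesis by blast
qed

lemma sm_prop:
  assumes "x > 0"
  shows "sm x \<in> Hp p \<and> (\<exists>d>0. \<forall>y\<in>{x-d..x}. f y = f x + sm x * (y - x))"
proof -
  obtain s d where "s \<in> Hp p" "d > 0" "\<forall>y\<in>{x-d..x}. f y = f x + s * (y - x)"
    using left_slope[OF assms] by blast
  moreover then have "sm x = s" by (intro sm_unique) 
  ultimately show ?thesis by blast
qed

lemma J_Hp: "x > 0 \<Longrightarrow> J x \<in> Hp p"
  unfolding J_def using sp_prop[of x] sm_prop[of x] by (intro Hp_diff[OF p2]) auto

lemma J_nonkink:
  assumes "x > 0" "x \<notin> B"
  shows "J x = 0"
proof -
  obtain d where d: "d > 0" "d < x" "\<forall>y\<in>B. y \<noteq> x \<longrightarrow> d \<le> \<bar>y - x\<bar>" using local_free[OF assms(1)] by blast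
  have e: "B \<inter> {x-d<..<x+d} = {}" using d assms(2) by force
  have "0 < x - d" "x - d < x + d" using d by auto
  then obtain s c where s: "\<forall>y\<in>{x-d..x+d}. f y = s * y + c" using aff[rule_format, OF _ _ e] by blast
  have "\<forall>y\<in>{x..x+d}. f y = f x + s * (y - x)" using s d(1) by (simp add: algebra_simps)
  then have "sp x = s" using sp_unique d(1) by blast
  moreover have "\<forall>y\<in>{x-d..x}. f y = f x + s * (y - x)" using s d(1) by (simp add: algebra_simps)
  then have "sm x = s" using sm_unique d(1) by blast
  ultimately show ?thesis unfolding J_def by simp
qed

lemma sp_scale:
  assumes "x > 0"
  shows "sp (real p * x) = sp x / real p"
proof -
  obtain d where d: "d > 0" "\<forall>y\<in>{x..x+d}. f y = f x + sp x * (y - x)" using sp_prop[OF assms] by blast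
  have "\<forall>y\<in>{real p * x..real p * x + real p * d}. f y = f (real p * x) + sp x / real p * (y - real p * x)"
  proof
    fix y assume y: "y \<in> {real p * x..real p * x + real p * d}"
    have yp: "y / real p \<in> {x..x+d}" using y p1 by (auto simp: field_simps)
    have "f y = f (real p * (y / real p))" using p1 by simp
    also have "\<dots> = f (y / real p)" by (rule per[rule_format]) (use yp assms in auto)
    also have "\<dots> = f x + sp x * (y / real p - x)" using d(2) yp by blast
    also have "\<dots> = f (real p * x) + sp x / real p * (y - real p * x)"
      using per assms p1 by (simp add: field_simps)
    finally show "f y = f (real p * x) + sp x / real p * (y - real p * x)" .
  qed
  moreover have "real p * d > 0" using d(1) p1 by simp
  ultimately show ?thesis using sp_unique by blast
qed

lemma sm_scale:
  assumes "x > 0"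
  shows "sm (real p * x) = sm x / real p"
proof -
  obtain d0 where d0: "d0 > 0" "\<forall>y\<in>{x-d0..x}. f y = f x + sm x * (y - x)" using sm_prop[OF assms] by blast
  define d where "d = min d0 (x/2)"
  have d12: "d > 0" "d < x" using d0(1) assms unfolding d_def by auto
  have "d \<le> d0" unfolding d_def by simp
  then have "{x-d..x} \<subseteq> {x-d0..x}" by auto
  have d3: "\<forall>y\<in>{x-d..x}. f y = f x + sm x * (y - x)"
  proof
    fix y assume "y \<in> {x-d..x}"
    then have "y \<in> {x-d0..x}" using \<open>{x-d..x} \<subseteq> {x-d0..x}\<close> by (rule rev_subsetD)
    then show "f y = f x + sm x * (y - x)" by (rule bspec[OF d0(2)])
  qed
  note d = d12 d3
  have key: "\<forall>y\<in>{real p * x - real p * d..real p * x}. f y = f (real p * x) + sm x / real p * (y - real p * x)"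
  proof
    fix y assume y: "y \<in> {real p * x - real p * d..real p * x}"
    have yp: "y / real p \<in> {x-d..x}" using y p1 by (auto simp: field_simps)
    have "f y = f (real p * (y / real p))" using p1 by simp
    also have "\<dots> = f (y / real p)" by (rule per[rule_format]) (use yp d12 in auto)
    also have "\<dots> = f x + sm x * (y / real p - x)" by (rule bspec[OF d3 yp])
    also have "\<dots> = f (real p * x) + sm x / real p * (y - real p * x)"
      using per assms p1 by (simp add: field_simps)
    finally show "f y = f (real p * x) + sm x / real p * (y - real p * x)" .
  qed
  have "real p * d > 0" using d12 p1 by simp
  from sm_unique[OF this key] show ?thesis .
qed

lemma J_scale:
  assumes "x > 0" shows "J (real p * x) = J x / real p"
proof -
  have a: "sp (real p * x) = sp x / real p" by (rule sp_scale[OF assms])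
  have b: "sm (real p * x) = sm x / real p" by (rule sm_scale[OF assms])
  show ?thesis unfolding J_def a b by (rule diff_divide_distrib[symmetric])
qed

lemma J_pow: "x > 0 \<Longrightarrow> J (x * real p ^ j) = J x / real p ^ j"
proof (induction j)
  case 0 then show ?case by simp
next
  case (Suc j)
  have e: "x * real p ^ Suc j = real p * (x * real p ^ j)" by simp
  have "x * real p ^ j > 0" using Suc p1 by simp
  then have "J (real p * (x * real p ^ j)) = J (x * real p ^ j) / real p" by (rule J_scale)
  then show ?case unfolding e using Suc by simp
qed

lemma J_class:
  assumes "x > 0"
  shows "J (x * real p ^ j / real p ^ n) = J x * real p ^ n / real p ^ j"
proof -
  have pos: "x / real p ^ n > 0" using assms p1 by simp
  have "J x = J (x / real p ^ n * real p ^ n)" using p1 by simp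
  also have "\<dots> = J (x / real p ^ n) / real p ^ n" by (rule J_pow[OF pos])
  finally have a: "J (x / real p ^ n) = J x * real p ^ n" using p1 by (simp add: field_simps)
  have "J (x * real p ^ j / real p ^ n) = J (x / real p ^ n * real p ^ j)" by (simp add: field_simps)
  also have "\<dots> = J (x / real p ^ n) / real p ^ j" by (rule J_pow[OF pos])
  finally show ?thesis using a by simp
qed

end


context PA
begin

lemma limR:
  assumes "x > 0"
  shows "Lim (at_right 0) (\<lambda>e. (f ((1 + e) * x) - f x) / e) = x * sp x"
proof -
  obtain d where d: "d > 0" and dd: "\<forall>y\<in>{x..x+d}. f y = f x + sp x * (y - x)"
    using sp_prop[OF assms] by blast
  have ev: "eventually (\<lambda>e. (f ((1 + e) * x) - f x) / e = x * sp x) (at_right 0)"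
    unfolding eventually_at_right_field
  proof (intro exI[of _ "d / x"] conjI allI impI)
    show "0 < d / x" using d assms by simp
    fix e :: real assume e: "0 < e" "e < d / x"
    have "e * x < d" using e assms by (simp add: field_simps)
    then have mem: "(1 + e) * x \<in> {x..x+d}" using e assms by (auto simp: algebra_simps)
    have "f ((1 + e) * x) = f x + sp x * ((1 + e) * x - x)" by (rule bspec[OF dd mem])
    then show "(f ((1 + e) * x) - f x) / e = x * sp x" using e by (simp add: field_simps)
  qed
  show ?thesis by (rule tendsto_Lim) (simp_all add: tendsto_eventually[OF ev])
qed

lemma limL:
  assumes "x > 0"
  shows "Lim (at_left 0) (\<lambda>e. (f ((1 + e) * x) - f x) / e) = x * sm x"
proof -
  obtain d where d: "d > 0" and dd: "\<forall>y\<in>{x-d..x}. f y = f x + sm x * (y - x)"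
    using sm_prop[OF assms] by blast
  have ev: "eventually (\<lambda>e. (f ((1 + e) * x) - f x) / e = x * sm x) (at_left 0)"
    unfolding eventually_at_left_field
  proof (intro exI[of _ "- d / x"] conjI allI impI)
    show "- d / x < 0" using d assms by simp
    fix e :: real assume e: "- d / x < e" "e < 0"
    have "- d < e * x" using e assms by (simp add: field_simps)
    then have mem: "(1 + e) * x \<in> {x-d..x}" using e assms by (auto simp: algebra_simps mult_nonpos_nonneg)
    have "f ((1 + e) * x) = f x + sm x * ((1 + e) * x - x)" by (rule bspec[OF dd mem])
    then show "(f ((1 + e) * x) - f x) / e = x * sm x" using e by (simp add: field_simps)
  qed
  show ?thesis by (rule tendsto_Lim) (simp_all add: tendsto_eventually[OF ev])
qed

lemma tele_n:
  "\<forall>a b. 0 < a \<longrightarrow> a < b \<longrightarrow> card (B \<inter> {a<..<b}) = n \<longrightarrow>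
     sm b - sm a = (\<Sum>r\<in>B \<inter> {a..<b}. J r)"
proof (induction n rule: less_induct)
  case (less n)
  show ?case
  proof (intro allI impI)
    fix a b :: real assume a: "0 < a" "a < b" "card (B \<inter> {a<..<b}) = n"
    have finab: "finite (B \<inter> {a..b})" using Bfin a(1) by blast
    have fin: "finite (B \<inter> {a<..<b})" by (rule finite_subset[OF _ finab]) auto
    show "sm b - sm a = (\<Sum>r\<in>B \<inter> {a..<b}. J r)"
    proof (cases "B \<inter> {a<..<b} = {}")
      case True
      obtain s c where sc: "\<forall>y\<in>{a..b}. f y = s * y + c" using aff[rule_format, OF a(1) a(2) True] by blast
      have ba: "b - a > 0" using a by simp
      have aab: "a \<in> {a..b}" "b \<in> {a..b}" using a by auto
      have fa: "f a = s * a + c" by (rule bspec[OF sc aab(1)])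
      have fb: "f b = s * b + c" by (rule bspec[OF sc aab(2)])
      have r1: "\<forall>y\<in>{a..a+(b-a)}. f y = f a + s * (y - a)"
      proof
        fix y assume "y \<in> {a..a+(b-a)}"
        then have "y \<in> {a..b}" by simp
        from bspec[OF sc this] show "f y = f a + s * (y - a)" unfolding fa by (simp add: algebra_simps)
      qed
      have spa: "sp a = s" by (rule sp_unique[OF ba r1])
      have r2: "\<forall>y\<in>{b-(b-a)..b}. f y = f b + s * (y - b)"
      proof
        fix y assume "y \<in> {b-(b-a)..b}"
        then have "y \<in> {a..b}" by simp
        from bspec[OF sc this] show "f y = f b + s * (y - b)" unfolding fb by (simp add: algebra_simps)
      qed
      have smb: "sm b = s" by (rule sm_unique[OF ba r2])
      have sub: "B \<inter> {a..<b} \<subseteq> {a}" using True by auto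
      show ?thesis
      proof (cases "a \<in> B")
        case True
        then have "B \<inter> {a..<b} = {a}" using sub a by auto
        then show ?thesis using spa smb unfolding J_def by simp
      next
        case False
        then have "B \<inter> {a..<b} = {}" using sub by auto
        moreover have "J a = 0" using J_nonkink[OF a(1) False] .
        ultimately show ?thesis using spa smb unfolding J_def by simp
      qed
    next
      case False
      then obtain c where c: "c \<in> B" "a < c" "c < b" by auto
      have ps1: "B \<inter> {a<..<c} \<subset> B \<inter> {a<..<b}" using c by auto
      have ps2: "B \<inter> {c<..<b} \<subset> B \<inter> {a<..<b}" using c by auto
      have lt1: "card (B \<inter> {a<..<c}) < n" using psubset_card_mono[OF fin ps1] a(3) by simp
      have lt2: "card (B \<inter> {c<..<b}) < n" using psubset_card_mono[OF fin ps2] a(3) by simp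
      have c0: "0 < c" using a c by simp
      have h1: "sm c - sm a = (\<Sum>r\<in>B \<inter> {a..<c}. J r)"
        using less.IH[OF lt1] a(1) c(2) by blast
      have h2: "sm b - sm c = (\<Sum>r\<in>B \<inter> {c..<b}. J r)"
        using less.IH[OF lt2] c0 c(3) by blast
      have un: "B \<inter> {a..<b} = (B \<inter> {a..<c}) \<union> (B \<inter> {c..<b})" using c by auto
      have dj: "(B \<inter> {a..<c}) \<inter> (B \<inter> {c..<b}) = {}" by auto
      have f1: "finite (B \<inter> {a..<c})" by (rule finite_subset[OF _ finab]) (use c in auto)
      have f2: "finite (B \<inter> {c..<b})" by (rule finite_subset[OF _ finab]) (use c in auto)
      have "(\<Sum>r\<in>B \<inter> {a..<b}. J r) = (\<Sum>r\<in>B \<inter> {a..<c}. J r) + (\<Sum>r\<in>B \<inter> {c..<b}. J r)"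
        unfolding un by (rule sum.union_disjoint[OF f1 f2 dj])
      then show ?thesis using h1 h2 by simp
    qed
  qed
qed

lemma tele: "0 < a \<Longrightarrow> a < b \<Longrightarrow> sm b - sm a = (\<Sum>r\<in>B \<inter> {a..<b}. J r)"
  using tele_n by blast

end


context PA
begin

definition L where "L H = (SOME l. l > 0 \<and> H = scale l (Hp p))"

lemma L_prop:
  assumes "H \<in> Cp p"
  shows "L H > 0 \<and> H = scale (L H) (Hp p)"
proof -
  have "\<exists>l. l > 0 \<and> H = scale l (Hp p)" using assms unfolding Cp_def by blast
  then show ?thesis unfolding L_def by (rule someI_ex)
qed

lemma D_eq:
  assumes "H \<in> Cp p"
  shows "principal_div p f H = L H * J (L H)"
proof -
  have pos: "L H > 0" using L_prop[OF assms] by blast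
  have "principal_div p f H = OrdH p H f" using assms unfolding principal_div_def by simp
  also have "\<dots> = L H * sp (L H) - L H * sm (L H)"
    unfolding OrdH_def Let_def L_def[symmetric] using limR[OF pos] limL[OF pos] by simp
  finally show ?thesis unfolding J_def by (simp add: right_diff_distrib)
qed

lemma chiH_eq: "chiH p H y = chi p (y / L H)"
  unfolding chiH_def L_def ..

lemma main:
  "principal_div p f \<in> Div p \<and> chiDiv p (principal_div p f) = 0"
proof -
  define D where "D = principal_div p f"
  have DH: "D H = L H * J (L H)" if "H \<in> Cp p" for H using D_eq[OF that] unfolding D_def .
  define K where "K = {r. 1 \<le> r \<and> r < real p \<and> J r \<noteq> 0}"
  have KB: "K \<subseteq> B \<inter> {1..<real p}"
  proof
    fix r assume "r \<in> K"
    then have r: "1 \<le> r" "r < real p" "J r \<noteq> 0" unfolding K_def by auto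
    then have "r \<in> B" using J_nonkink[of r] by force
    then show "r \<in> B \<inter> {1..<real p}" using r by auto
  qed
  have finB: "finite (B \<inter> {1..<real p})"
    by (rule finite_subset[OF _ Bfin[rule_format, of 1 "real p"]]) auto
  have finK: "finite K" using finite_subset[OF KB finB] .
  have img: "{H \<in> Cp p. D H \<noteq> 0} = (\<lambda>r. scale r (Hp p)) ` K"
  proof
    show "{H \<in> Cp p. D H \<noteq> 0} \<subseteq> (\<lambda>r. scale r (Hp p)) ` K"
    proof
      fix H assume H: "H \<in> {H \<in> Cp p. D H \<noteq> 0}"
      then have HC: "H \<in> Cp p" and nz: "D H \<noteq> 0" by auto
      have Lp: "L H > 0" "H = scale (L H) (Hp p)" using L_prop[OF HC] by auto
      have Jnz: "J (L H) \<noteq> 0" using nz DH[OF HC] by auto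
      obtain j n where r: "1 \<le> L H * real p ^ j / real p ^ n" "L H * real p ^ j / real p ^ n < real p"
        using rep_exists[OF p2 Lp(1)] by blast
      define r where "r = L H * real p ^ j / real p ^ n"
      have "J r = J (L H) * real p ^ n / real p ^ j" unfolding r_def by (rule J_class[OF Lp(1)])
      then have "J r \<noteq> 0" using Jnz p1 by simp
      then have rK: "r \<in> K" using r unfolding K_def r_def by auto
      have "scale r (Hp p) = H" unfolding r_def using scale_eq[OF p2 Lp(1)] Lp(2) by simp
      then show "H \<in> (\<lambda>r. scale r (Hp p)) ` K" using rK by blast
    qed
    show "(\<lambda>r. scale r (Hp p)) ` K \<subseteq> {H \<in> Cp p. D H \<noteq> 0}"
    proof
      fix H assume "H \<in> (\<lambda>r. scale r (Hp p)) ` K"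
      then obtain r where rK: "r \<in> K" and H: "H = scale r (Hp p)" by blast
      have r: "1 \<le> r" "r < real p" "J r \<noteq> 0" using rK unfolding K_def by auto
      have r0: "r > 0" using r by simp
      have HC: "H \<in> Cp p" unfolding Cp_def H using r0 by blast
      have Lp: "L H > 0" "H = scale (L H) (Hp p)" using L_prop[OF HC] by auto
      obtain j n where jn: "L H = r * real p ^ j / real p ^ n"
        using class_lemma[OF prime Lp(1) r0] Lp(2) H by metis
      have "J (L H) = J r * real p ^ n / real p ^ j" unfolding jn by (rule J_class[OF r0])
      then have "J (L H) \<noteq> 0" using r(3) p1 by simp
      then have "D H \<noteq> 0" using DH[OF HC] Lp(1) by simp
      then show "H \<in> {H \<in> Cp p. D H \<noteq> 0}" using HC by blast
    qed
  qed
  have inj: "inj_on (\<lambda>r. scale r (Hp p)) K"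
  proof (rule inj_onI)
    fix r r' assume rK: "r \<in> K" and rK': "r' \<in> K" and eq: "scale r (Hp p) = scale r' (Hp p)"
    have r: "1 \<le> r" "r < real p" using rK unfolding K_def by auto
    have r': "1 \<le> r'" "r' < real p" using rK' unfolding K_def by auto
    obtain j n where jn: "r' = r * real p ^ j / real p ^ n"
      using class_lemma[OF prime _ _ eq[symmetric]] r r' by fastforce
    have "r * real p ^ j / real p ^ n = r" by (rule rep_unique[OF p2 r]) (use r' jn in auto)
    then show "r = r'" using jn by simp
  qed
  have val: "chiH p (scale r (Hp p)) (D (scale r (Hp p))) = chi p (J r)" if rK: "r \<in> K" for r
  proof -
    have r: "1 \<le> r" "r < real p" "J r \<noteq> 0" using rK unfolding K_def by auto
    have r0: "r > 0" using r by simp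
    define H where "H = scale r (Hp p)"
    have HC: "H \<in> Cp p" unfolding Cp_def H_def using r0 by blast
    have Lp: "L H > 0" "H = scale (L H) (Hp p)" using L_prop[OF HC] by auto
    obtain j n where jn: "L H = r * real p ^ j / real p ^ n"
      using class_lemma[OF prime Lp(1) r0] Lp(2) H_def by metis
    have JL: "J (L H) = J r * real p ^ n / real p ^ j" unfolding jn by (rule J_class[OF r0])
    have "chiH p H (D H) = chi p (D H / L H)" by (rule chiH_eq)
    also have "D H / L H = J (L H)" using DH[OF HC] Lp(1) by simp
    also have "chi p (J (L H)) = chi p (J r)" unfolding JL using Hp_mult_pow[OF p2 J_Hp[OF r0]] by blast
    finally show ?thesis unfolding H_def .
  qed
  have inDiv: "D \<in> Div p"
    unfolding Div_def
  proof (intro CollectI conjI ballI allI impI)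
    fix H assume HC: "H \<in> Cp p"
    have Lp: "L H > 0" "H = scale (L H) (Hp p)" using L_prop[OF HC] by auto
    have "J (L H) \<in> Hp p" using J_Hp[OF Lp(1)] .
    then have "L H * J (L H) \<in> scale (L H) (Hp p)" unfolding scale_def by blast
    then show "D H \<in> H" using DH[OF HC] Lp(2) by simp
  next
    fix H assume "H \<notin> Cp p" then show "D H = 0" unfolding D_def principal_div_def by simp
  next
    show "finite {H \<in> Cp p. D H \<noteq> 0}" unfolding img using finK by simp
  qed
  have "(\<Sum>H\<in>{H \<in> Cp p. D H \<noteq> 0}. chiH p H (D H)) = (\<Sum>r\<in>K. chiH p (scale r (Hp p)) (D (scale r (Hp p))))"
    unfolding img by (rule sum.reindex[OF inj, unfolded comp_def])
  also have "\<dots> = (\<Sum>r\<in>K. chi p (J r))" by (rule sum.cong) (auto simp: val)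
  finally have s1: "chiDiv p D = (\<Sum>r\<in>K. chi p (J r)) mod (int p - 1)" unfolding chiDiv_def by simp
  have JK: "\<forall>r\<in>K. J r \<in> Hp p" using J_Hp unfolding K_def by auto
  have s2: "(\<Sum>r\<in>K. chi p (J r)) mod (int p - 1) = chi p (\<Sum>r\<in>K. J r)"
    using chi_sum[OF p2 finK JK] by blast
  have s3: "(\<Sum>r\<in>K. J r) = (\<Sum>r\<in>B \<inter> {1..<real p}. J r)"
  proof (rule sum.mono_neutral_left[OF finB KB])
    show "\<forall>i\<in>B \<inter> {1..<real p} - K. J i = 0" unfolding K_def by auto
  qed
  have s4: "(\<Sum>r\<in>B \<inter> {1..<real p}. J r) = sm (real p) - sm 1" using tele[of 1 "real p"] p1 by simp
  have s5: "sm (real p) = sm 1 / real p" using sm_scale[of 1] by simp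
  have s6: "sm 1 \<in> Hp p" using sm_prop[of 1] by simp
  have "chiDiv p D = chi p (sm 1 / real p - sm 1)" using s1 s2 s3 s4 s5 by simp
  also have "\<dots> = 0" by (rule chi_final[OF p2 s6])
  finally show ?thesis using inDiv unfolding D_def by simp
qed

end


theorem proposition5p5:
  fixes p :: nat
  assumes "prime p"
  shows "(\<forall>H\<in>Cp p. \<exists>!g. g \<in> extensional H \<and>
            (\<forall>l>0. H = scale l (Hp p) \<longrightarrow> (\<forall>x\<in>H. g x = chi p (x / l))))
       \<and> (\<forall>f. inK p f \<longrightarrow> principal_div p f \<in> Div p \<and> chiDiv p (principal_div p f) = 0)"
proof (intro conjI ballI allI impI)
  have p2: "p \<ge> 2" using assms prime_ge_2_nat by blast
  fix H assume "H \<in> Cp p"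
  then obtain l0 where l0: "l0 > 0" "H = scale l0 (Hp p)" unfolding Cp_def by blast
  define g where "g = restrict (\<lambda>x. chi p (x / l0)) H"
  have hprop: "chi p (x / l) = chi p (x / l0)" if l: "l > 0" "H = scale l (Hp p)" and x: "x \<in> H" for l x
  proof -
    obtain j n where jn: "l = l0 * real p ^ j / real p ^ n"
      using class_lemma[OF assms l(1) l0(1)] l(2) l0(2) by metis
    obtain h where h: "h \<in> Hp p" "x = l0 * h" using x l0(2) unfolding scale_def by blast
    have "x / l = h * real p ^ n / real p ^ j" using jn h l0 p2 l(1) by (simp add: field_simps)
    moreover have "x / l0 = h" using h l0 by simp
    ultimately show ?thesis using Hp_mult_pow[OF p2 h(1), of n j] by simp
  qed
  show "\<exists>!g. g \<in> extensional H \<and> (\<forall>l>0. H = scale l (Hp p) \<longrightarrow> (\<forall>x\<in>H. g x = chi p (x / l)))"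
  proof (rule ex1I[of _ g])
    show "g \<in> extensional H \<and> (\<forall>l>0. H = scale l (Hp p) \<longrightarrow> (\<forall>x\<in>H. g x = chi p (x / l)))"
      using hprop unfolding g_def by auto
    fix g' assume g': "g' \<in> extensional H \<and> (\<forall>l>0. H = scale l (Hp p) \<longrightarrow> (\<forall>x\<in>H. g' x = chi p (x / l)))"
    show "g' = g"
    proof (rule extensionalityI[of _ H])
      show "g' \<in> extensional H" using g' by blast
      show "g \<in> extensional H" unfolding g_def by simp
      fix x assume "x \<in> H"
      then show "g' x = g x" using g' l0 unfolding g_def by auto
    qed
  qed
next
  fix f assume "inK p f"
  then obtain B where per: "\<forall>x>0. f (real p * x) = f x"
    and Bfin: "\<forall>a b. 0 < a \<longrightarrow> finite (B \<inter> {a..b})"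
    and aff: "\<forall>a b. 0 < a \<longrightarrow> a < b \<longrightarrow> B \<inter> {a<..<b} = {} \<longrightarrow>
           (\<exists>s\<in>Hp p. \<exists>c. \<forall>x\<in>{a..b}. f x = s * x + c)"
    unfolding inK_def by blast
  interpret PA p f B using assms per Bfin aff by unfold_locales
  show "principal_div p f \<in> Div p" using main by blast
  show "chiDiv p (principal_div p f) = 0" using main by blast
qed


end
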